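(* Let $N$ be even, $p=N/2$, and consider the $(N,p)$-projective code, whose qubits are the projective $p$-faces. Let $\mathcal{E}$ be an error (set of qubits) of weight $|\mathcal{E}|\le N/64$. Then the number of checks indexed by projective $(p+1)$-faces that act on at least one qubit of $\mathcal{E}$ is at least $|\mathcal{E}|\cdot(N/2)\cdot(15/16)$, and the number of checks indexed by projective $(p-1)$-faces that act on at least one qubit of $\mathcal{E}$ is at least $|\mathcal{E}|\cdot N\cdot(15/16)$.
   Context: A $r$-face of the $N$-cube is a word in $\{0,1,*\}^N$ with exactly $r$ symbols $*$. The projective cube identifies a face $x$ with $x+\mathbf{1}$ (complementing every non-$*$ entry, with the convention $*+0=*+1=*$); a projective $r$-face is such an equivalence class. The upper shadow of a face replaces one non-$*$ entry by $*$; the lower shadow replaces one $*$ by $0$ or $1$; these are extended to projective faces by taking equivalence classes. The $(N,p)$-projective code is the CSS code whose qubits are the projective $p$-faces, with one family of checks indexed by projective $(p+1)$-faces $f$ (each acting on the $p$-faces in the lower shadow of $f$) and the other family indexed by projective $(p-1)$-faces $g$ (each acting on the $p$-faces in the upper shadow of $g$). *)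

theory Defs
  imports Complex_Main
begin

text \<open>Symbols of a face word: 0, 1, or * (free coordinate).\<close>
datatype sym = S0 | S1 | SStar

definition face :: "nat \<Rightarrow> nat \<Rightarrow> sym list set" where
  "face N r = {x. length x = N \<and> length (filter (\<lambda>s. s = SStar) x) = r}"

fun flip :: "sym \<Rightarrow> sym" where
  "flip S0 = S1" | "flip S1 = S0" | "flip SStar = SStar"

definition compl_face :: "sym list \<Rightarrow> sym list" where
  "compl_face x = map flip x"

definition pclass :: "sym list \<Rightarrow> sym list set" where
  "pclass x = {x, compl_face x}"

definition pface :: "nat \<Rightarrow> nat \<Rightarrow> sym list set set" where
  "pface N r = pclass ` face N r"

definition upper_shadow :: "sym list \<Rightarrow> sym list set" where
  "upper_shadow x = {x[i := SStar] | i. i < length x \<and> x ! i \<noteq> SStar}"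

definition lower_shadow :: "sym list \<Rightarrow> sym list set" where
  "lower_shadow x = {x[i := b] | i b. i < length x \<and> x ! i = SStar \<and> b \<in> {S0, S1}}"

definition pupper_shadow :: "sym list set \<Rightarrow> sym list set set" where
  "pupper_shadow F = pclass ` (\<Union>x\<in>F. upper_shadow x)"

definition plower_shadow :: "sym list set \<Rightarrow> sym list set set" where
  "plower_shadow F = pclass ` (\<Union>x\<in>F. lower_shadow x)"

text \<open>Checks of the (N,p)-projective code touched by an error E (a set of qubits = projective p-faces):
  checks indexed by projective (p+1)-faces act on their lower shadow,
  checks indexed by projective (p-1)-faces act on their upper shadow.\<close>
definition touched_upper_checks :: "nat \<Rightarrow> nat \<Rightarrow> sym list set set \<Rightarrow> sym list set set" where
  "touched_upper_checks N p E = {f \<in> pface N (p + 1). plower_shadow f \<inter> E \<noteq> {}}"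

definition touched_lower_checks :: "nat \<Rightarrow> nat \<Rightarrow> sym list set set \<Rightarrow> sym list set set" where
  "touched_lower_checks N p E = {g \<in> pface N (p - 1). pupper_shadow g \<inter> E \<noteq> {}}"

end

theory Submission
  imports Defs
begin

lemma filter_upd:
  "i < length xs \<Longrightarrow> length (filter P (xs[i:=v])) + (if P (xs!i) then 1 else 0)
     = length (filter P xs) + (if P v then 1 else 0)"
proof (induction xs arbitrary: i)
  case Nil then show ?case by simp
next
  case (Cons a xs)
  show ?case
  proof (cases i)
    case 0 then show ?thesis by simp
  next
    case (Suc k)
    then have "k < length xs" using Cons.prems by simp
    from Cons.IH[OF this] show ?thesis using Suc by simp
  qed
qed

lemma flip_star[simp]: "(flip s = SStar) = (s = SStar)"
  by (cases s) auto

lemma flip_flip[simp]: "flip (flip s) = s"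
  by (cases s) auto

lemma compl_compl[simp]: "compl_face (compl_face x) = x"
  by (simp add: compl_face_def map_idI comp_def)

lemma compl_face_mem: "x \<in> face N r \<Longrightarrow> compl_face x \<in> face N r"
  by (simp add: face_def compl_face_def filter_map comp_def)

lemma pclass_compl[simp]: "pclass (compl_face x) = pclass x"
  by (auto simp: pclass_def)

lemma compl_neq: "i < length x \<Longrightarrow> x ! i \<noteq> SStar \<Longrightarrow> compl_face x \<noteq> x"
proof
  assume h: "i < length x" "x ! i \<noteq> SStar" "compl_face x = x"
  then have "flip (x ! i) = x ! i" by (metis compl_face_def nth_map)
  then show False using h(2) by (cases "x ! i") auto
qed

lemma finite_face: "finite (face N r)"
proof -
  have "face N r \<subseteq> {xs. set xs \<subseteq> {S0,S1,SStar} \<and> length xs = N}"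
    by (auto simp: face_def) (metis sym.exhaust)
  moreover have "finite {xs. set xs \<subseteq> {S0,S1,SStar} \<and> length xs = N}"
    by (rule finite_lists_length_eq) simp
  ultimately show ?thesis by (rule finite_subset)
qed

lemma finite_pface: "finite (pface N r)"
  by (simp add: pface_def finite_face)

lemma nonstar_card: "x \<in> face N r \<Longrightarrow> card {i. i < N \<and> x ! i \<noteq> SStar} = N - r"
  using sum_length_filter_compl[of "\<lambda>s. s = SStar" x]
  by (clarsimp simp add: face_def length_filter_conv_card) arith

lemma star_card: "x \<in> face N r \<Longrightarrow> card {i. i < N \<and> x ! i = SStar} = r"
  by (clarsimp simp: face_def length_filter_conv_card)

lemma us_eq: "upper_shadow x = (\<lambda>i. x[i:=SStar]) ` {i. i < length x \<and> x ! i \<noteq> SStar}"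
  by (auto simp: upper_shadow_def)

lemma ls_eq: "lower_shadow x = (\<lambda>(i,b). x[i:=b]) ` ({i. i < length x \<and> x ! i = SStar} \<times> {S0,S1})"
  by (auto simp: lower_shadow_def)

lemma finite_us: "finite (upper_shadow x)" by (simp add: us_eq)
lemma finite_ls: "finite (lower_shadow x)" by (simp add: ls_eq)

lemma card_us: assumes "x \<in> face N r" shows "card (upper_shadow x) = N - r"
proof -
  have L: "length x = N" using assms by (simp add: face_def)
  have "inj_on (\<lambda>i. x[i:=SStar]) {i. i < length x \<and> x ! i \<noteq> SStar}"
    by (rule inj_onI) (metis (mono_tags, lifting) mem_Collect_eq nth_list_update_eq nth_list_update_neq)
  then show ?thesis using nonstar_card[OF assms] L by (simp add: us_eq card_image)
qed

lemma card_ls: assumes "x \<in> face N r" shows "card (lower_shadow x) = 2 * r"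
proof -
  have L: "length x = N" using assms by (simp add: face_def)
  have "inj_on (\<lambda>(i,b). x[i:=b]) ({i. i < length x \<and> x ! i = SStar} \<times> {S0,S1})"
  proof (rule inj_onI, clarsimp)
    fix i b j c assume h: "i < length x" "x ! i = SStar" "b = S0 \<or> b = S1" "j < length x" "x!j = SStar"
      "c = S0 \<or> c = S1" "x[i := b] = x[j := c]"
    show "i = j \<and> b = c"
    proof (cases "i = j")
      case True then show ?thesis using h by (metis nth_list_update_eq)
    next
      case False
      have "x[i:=b] ! i = x[j:=c] ! i" using h(7) by simp
      then have "b = x ! i" using h(1,4) False by (metis nth_list_update_eq nth_list_update_neq)
      then show ?thesis using h by auto
    qed
  qed
  then show ?thesis using star_card[OF assms] L by (simp add: ls_eq card_image card_cartesian_product)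
qed

lemma upd_eq_cases:
  assumes "x[i:=u] = y[j:=v]" "length x = length y" "i < length x" "j < length x"
  shows "(i = j \<and> (\<forall>k<length x. k \<noteq> i \<longrightarrow> x!k = y!k) \<and> u = v) \<or>
         (i \<noteq> j \<and> y!i = u \<and> x!j = v \<and> (\<forall>k<length x. k \<noteq> i \<longrightarrow> k \<noteq> j \<longrightarrow> x!k = y!k))"
proof -
  have e: "\<And>k. x[i:=u]!k = y[j:=v]!k" using assms(1) by simp
  have ei: "x[i:=u]!i = u" using assms(3) by simp
  have ej: "y[j:=v]!j = v" using assms(2,4) by simp
  show ?thesis
  proof (cases "i = j")
    case True
    have "\<forall>k<length x. k \<noteq> i \<longrightarrow> x!k = y!k"
    proof (intro allI impI)
      fix k assume "k < length x" "k \<noteq> i"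
      then show "x!k = y!k" using e[of k] True by simp
    qed
    moreover have "u = v" using ei ej e[of i] True by simp
    ultimately show ?thesis using True by simp
  next
    case False
    have "y!i = u" using ei e[of i] False by simp
    moreover have "x!j = v" using ej e[of j] False by simp
    moreover have "\<forall>k<length x. k \<noteq> i \<longrightarrow> k \<noteq> j \<longrightarrow> x!k = y!k"
    proof (intro allI impI)
      fix k assume "k < length x" "k \<noteq> i" "k \<noteq> j"
      then show "x!k = y!k" using e[of k] by simp
    qed
    ultimately show ?thesis using False by simp
  qed
qed

lemma us_inter:
  assumes "length x = length y" "x \<noteq> y"
  shows "card (upper_shadow x \<inter> upper_shadow y) \<le> 1"
proof -
  have "\<forall>f\<in>upper_shadow x \<inter> upper_shadow y. \<forall>g\<in>upper_shadow x \<inter> upper_shadow y. f = g"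
  proof (intro ballI)
    fix f g assume f: "f \<in> upper_shadow x \<inter> upper_shadow y" and g: "g \<in> upper_shadow x \<inter> upper_shadow y"
    obtain i where i: "f = x[i:=SStar]" "i < length x" "x!i \<noteq> SStar"
      using f by (auto simp: upper_shadow_def)
    obtain j where j: "f = y[j:=SStar]" "j < length x" "y!j \<noteq> SStar"
      using f assms(1) by (auto simp: upper_shadow_def)
    obtain i' where i': "g = x[i':=SStar]" "i' < length x" "x!i' \<noteq> SStar"
      using g by (auto simp: upper_shadow_def)
    obtain j' where j': "g = y[j':=SStar]" "j' < length x" "y!j' \<noteq> SStar"
      using g assms(1) by (auto simp: upper_shadow_def)
    note ij = i(1) j(1) i(2) j(2) i(3) j(3)
    note ij' = i'(1) j'(1) i'(2) j'(2) i'(3) j'(3)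
    have "x[i:=SStar] = y[j:=SStar]" using ij by simp
    note c1 = upd_eq_cases[OF this assms(1) ij(3,4)]
    have "x[i':=SStar] = y[j':=SStar]" using ij' by simp
    note c2 = upd_eq_cases[OF this assms(1) ij'(3,4)]
    have D: "x!i \<noteq> y!i"
    proof
      assume xy: "x!i = y!i"
      from c1 show False
      proof
        assume a: "i = j \<and> (\<forall>k<length x. k \<noteq> i \<longrightarrow> x!k = y!k) \<and> SStar = SStar"
        then have "\<forall>k<length x. x!k = y!k" using xy by auto
        then have "x = y" using assms(1) by (simp add: nth_equalityI)
        then show False using assms(2) by simp
      next
        assume a: "i \<noteq> j \<and> y!i = SStar \<and> x!j = SStar \<and> (\<forall>k<length x. k \<noteq> i \<longrightarrow> k \<noteq> j \<longrightarrow> x!k = y!k)"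
        then show False using xy ij(5) by simp
      qed
    qed
    have "i' = i"
    proof (rule ccontr)
      assume ne: "i' \<noteq> i"
      from c2 show False
      proof
        assume a: "i' = j' \<and> (\<forall>k<length x. k \<noteq> i' \<longrightarrow> x!k = y!k) \<and> SStar = SStar"
        then show False using ne D ij(3) by auto
      next
        assume a: "i' \<noteq> j' \<and> y!i' = SStar \<and> x!j' = SStar \<and> (\<forall>k<length x. k \<noteq> i' \<longrightarrow> k \<noteq> j' \<longrightarrow> x!k = y!k)"
        then have "i = j'" using ne D ij(3) by auto
        then show False using a ij(5) by simp
      qed
    qed
    then show "f = g" using ij ij' by simp
  qed
  moreover have "finite (upper_shadow x \<inter> upper_shadow y)" by (simp add: finite_us)
  ultimately show ?thesis using card_le_Suc0_iff_eq by auto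
qed

lemma ls_inter:
  assumes "length x = length y" "x \<noteq> y"
  shows "card (lower_shadow x \<inter> lower_shadow y) \<le> 1"
proof -
  have "\<forall>f\<in>lower_shadow x \<inter> lower_shadow y. \<forall>g\<in>lower_shadow x \<inter> lower_shadow y. f = g"
  proof (intro ballI)
    fix f g assume f: "f \<in> lower_shadow x \<inter> lower_shadow y" and g: "g \<in> lower_shadow x \<inter> lower_shadow y"
    obtain i b where i: "f = x[i:=b]" "i < length x" "x!i = SStar" "b \<noteq> SStar"
      using f by (auto simp: lower_shadow_def)
    obtain j c where j: "f = y[j:=c]" "j < length x" "y!j = SStar" "c \<noteq> SStar"
      using f assms(1) by (auto simp: lower_shadow_def)
    obtain i' b' where i': "g = x[i':=b']" "i' < length x" "x!i' = SStar" "b' \<noteq> SStar"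
      using g by (auto simp: lower_shadow_def)
    obtain j' c' where j': "g = y[j':=c']" "j' < length x" "y!j' = SStar" "c' \<noteq> SStar"
      using g assms(1) by (auto simp: lower_shadow_def)
    note ij = i(1) j(1) i(2) j(2) i(3) j(3) i(4) j(4)
    note ij' = i'(1) j'(1) i'(2) j'(2) i'(3) j'(3) i'(4) j'(4)
    have "x[i:=b] = y[j:=c]" using ij by simp
    note c1 = upd_eq_cases[OF this assms(1) ij(3,4)]
    have "x[i':=b'] = y[j':=c']" using ij' by simp
    note c2 = upd_eq_cases[OF this assms(1) ij'(3,4)]
    have n1: "i \<noteq> j"
    proof
      assume ieq: "i = j"
      have "\<forall>k<length x. x!k = y!k"
      proof (intro allI impI)
        fix k assume k: "k < length x"
        show "x!k = y!k"
        proof (cases "k = i")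
          case True then show ?thesis using ieq ij(5,6) by simp
        next
          case False then show ?thesis using c1 ieq k by auto
        qed
      qed
      then have "x = y" using assms(1) by (simp add: nth_equalityI)
      then show False using assms(2) by simp
    qed
    have n2: "i' \<noteq> j'"
    proof
      assume ieq: "i' = j'"
      have "\<forall>k<length x. x!k = y!k"
      proof (intro allI impI)
        fix k assume k: "k < length x"
        show "x!k = y!k"
        proof (cases "k = i'")
          case True then show ?thesis using ieq ij'(5,6) by simp
        next
          case False then show ?thesis using c2 ieq k by auto
        qed
      qed
      then have "x = y" using assms(1) by (simp add: nth_equalityI)
      then show False using assms(2) by simp
    qed
    have a1: "y!i = b" using c1 n1 by simp
    have a2: "y!i' = b' \<and> x!j' = c' \<and> (\<forall>k<length x. k \<noteq> i' \<longrightarrow> k \<noteq> j' \<longrightarrow> x!k = y!k)"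
      using c2 n2 by simp
    have D: "x!i \<noteq> y!i" using a1 ij(5,7) by simp
    have "i' = i"
    proof (rule ccontr)
      assume ne: "i' \<noteq> i"
      then have "i = j'" using a2 D ij(3) by auto
      then show False using a2 ij(5) ij'(8) by simp
    qed
    then have "i' = i \<and> b' = b" using a1 a2 by simp
    then show "f = g" using ij ij' by simp
  qed
  moreover have "finite (lower_shadow x \<inter> lower_shadow y)" by (simp add: finite_ls)
  ultimately show ?thesis using card_le_Suc0_iff_eq by auto
qed

lemma us_face: assumes "x \<in> face N r" "f \<in> upper_shadow x" shows "f \<in> face N (r+1)"
proof -
  obtain i where i: "f = x[i:=SStar]" "i < length x" "x!i \<noteq> SStar" using assms(2) by (auto simp: upper_shadow_def)
  from filter_upd[OF i(2), of "\<lambda>s. s = SStar" SStar] show ?thesis using assms(1) i by (simp add: face_def)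
qed

lemma ls_face: assumes "x \<in> face N r" "g \<in> lower_shadow x" shows "g \<in> face N (r-1)"
proof -
  obtain i b where i: "g = x[i:=b]" "i < length x" "x!i = SStar" "b \<noteq> SStar" using assms(2) by (auto simp: lower_shadow_def)
  from filter_upd[OF i(2), of "\<lambda>s. s = SStar" b] show ?thesis using assms(1) i by (simp add: face_def)
qed

lemma us_back: assumes "f \<in> upper_shadow x" shows "x \<in> lower_shadow f"
proof -
  obtain i where i: "f = x[i:=SStar]" "i < length x" "x!i \<noteq> SStar" using assms by (auto simp: upper_shadow_def)
  have "x = f[i := x!i]" using i by simp
  moreover have "x!i \<in> {S0,S1}" using i(3) by (cases "x!i") auto
  ultimately show ?thesis unfolding lower_shadow_def using i by fastforce
qed

lemma ls_back: assumes "g \<in> lower_shadow x" shows "x \<in> upper_shadow g"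
proof -
  obtain i b where i: "g = x[i:=b]" "i < length x" "x!i = SStar" "b \<in> {S0,S1}" using assms by (auto simp: lower_shadow_def)
  have "x = g[i := SStar]" using i by (metis list_update_overwrite list_update_id)
  moreover have "g!i \<noteq> SStar" using i by auto
  ultimately show ?thesis unfolding upper_shadow_def using i by fastforce
qed

lemma union_bound:
  assumes "finite A" "\<And>a. a \<in> A \<Longrightarrow> finite (B a)" "\<And>a. a \<in> A \<Longrightarrow> d \<le> real (card (B a))"
    "\<And>a b. a \<in> A \<Longrightarrow> b \<in> A \<Longrightarrow> a \<noteq> b \<Longrightarrow> card (B a \<inter> B b) \<le> 1"
  shows "real (card A) * d - real (card A)^2/2 \<le> real (card (\<Union>a\<in>A. B a))"
  using assms
proof (induction A rule: finite_induct)
  case empty then show ?case by simp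
next
  case (insert x F)
  define U where "U = (\<Union>a\<in>F. B a)"
  have fU: "finite U" using insert by (simp add: U_def)
  have fB: "finite (B x)" using insert by simp
  have IH: "real (card F) * d - real (card F)^2/2 \<le> real (card U)"
    unfolding U_def by (rule insert.IH) (use insert.prems in auto)
  have "B x \<inter> U = (\<Union>b\<in>F. B x \<inter> B b)" by (auto simp: U_def)
  then have "card (B x \<inter> U) \<le> (\<Sum>b\<in>F. card (B x \<inter> B b))"
    using card_UN_le[OF insert.hyps(1), of "\<lambda>b. B x \<inter> B b"] by simp
  also have "\<dots> \<le> (\<Sum>b\<in>F. 1)"
    by (rule sum_mono) (use insert in auto)
  finally have I: "card (B x \<inter> U) \<le> card F" by simp
  have CU: "card (B x \<union> U) + card (B x \<inter> U) = card (B x) + card U"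
    using card_Un_Int[OF fB fU] by simp
  have dx: "d \<le> real (card (B x))" using insert by simp
  have eq: "(\<Union>a\<in>insert x F. B a) = B x \<union> U" by (simp add: U_def)
  have ci: "card (insert x F) = card F + 1" using insert by simp
  have "real (card (B x \<union> U)) \<ge> real (card (B x)) + real (card U) - real (card F)"
    using CU I by linarith
  moreover have "(real (card F) + 1) * d - (real (card F) + 1)^2/2
      = real (card F) * d - real (card F)^2/2 + d - real (card F) - 1/2"
    by (simp add: power2_eq_square algebra_simps)
  ultimately show ?case unfolding eq ci of_nat_add of_nat_1 using IH dx by linarith
qed

lemma card_pclass_image: assumes "finite U" shows "card U \<le> 2 * card (pclass ` U)"
proof -
  have "U \<subseteq> \<Union>(pclass ` U)" by (auto simp: pclass_def)
  moreover have "finite (\<Union>(pclass ` U))" using assms by (auto simp: pclass_def)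
  ultimately have "card U \<le> card (\<Union>(pclass ` U))" by (rule card_mono[rotated])
  also have "\<dots> \<le> sum card (pclass ` U)" by (rule card_Union_le_sum_card)
  also have "\<dots> \<le> (\<Sum>F\<in>pclass ` U. 2)"
    by (rule sum_mono) (auto simp: pclass_def card_insert_if)
  finally show ?thesis by simp
qed

lemma pclass_mem: "X = pclass x0 \<Longrightarrow> x \<in> X \<Longrightarrow> pclass x = X"
  by (auto simp: pclass_def)

theorem mainTheorem4:
  fixes N p :: nat and E :: "sym list set set"
  assumes "even N" and "p = N div 2"
    and "E \<subseteq> pface N p"
    and "real (card E) \<le> real N / 64"
  shows "real (card (touched_upper_checks N p E)) \<ge> real (card E) * (real N / 2) * (15 / 16)
       \<and> real (card (touched_lower_checks N p E)) \<ge> real (card E) * real N * (15 / 16)"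
proof (cases "card E = 0")
  case True then show ?thesis by simp
next
  case False
  define e where "e = real (card E)"
  have finE: "finite E" using assms(3) finite_pface finite_subset by blast
  have e0: "e > 0" using False e_def by simp
  have Np: "real N = 2 * real p" using assms(1,2) by auto
  have p0: "p > 0" using e0 assms(4) e_def Np by auto
  have Npp: "N - p = p" using assms(1,2) by auto
  define E' where "E' = \<Union>E"
  have E'face: "E' \<subseteq> face N p"
    using assms(3) by (auto simp: E'_def pface_def pclass_def compl_face_mem)
  have finE': "finite E'" using E'face finite_face finite_subset by blast
  have len: "\<And>x. x \<in> E' \<Longrightarrow> length x = N" using E'face by (auto simp: face_def)
  have cE': "card E' = 2 * card E"
  proof -
    have "pairwise disjnt E"
    proof (rule pairwiseI)
      fix X Y assume XY: "X \<in> E" "Y \<in> E" "X \<noteq> Y"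
      obtain a where a: "X = pclass a" using XY assms(3) by (auto simp: pface_def)
      obtain b where b: "Y = pclass b" using XY assms(3) by (auto simp: pface_def)
      show "disjnt X Y"
      proof (rule ccontr)
        assume "\<not> disjnt X Y"
        then obtain z where "z \<in> X" "z \<in> Y" by (auto simp: disjnt_def)
        then have "pclass z = X" "pclass z = Y" using a b pclass_mem by blast+
        then show False using XY by simp
      qed
    qed
    moreover have "\<And>X. X \<in> E \<Longrightarrow> finite X" using assms(3) by (auto simp: pface_def pclass_def)
    ultimately have "card E' = sum card E" unfolding E'_def by (rule card_Union_disjoint)
    also have "\<dots> = sum (\<lambda>_. 2) E"
    proof (rule sum.cong)
      fix X assume X: "X \<in> E"
      obtain a where a: "X = pclass a" "a \<in> face N p" using X assms(3) by (auto simp: pface_def)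
      have "card {i. i < N \<and> a ! i \<noteq> SStar} = p" using nonstar_card[OF a(2)] Npp by simp
      then obtain i where "i < N" "a ! i \<noteq> SStar" using p0 by (metis (mono_tags, lifting) card.empty empty_Collect_eq less_irrefl)
      then have "compl_face a \<noteq> a" using a(2) compl_neq by (auto simp: face_def)
      then show "card X = 2" using a by (auto simp: pclass_def)
    qed simp
    finally show ?thesis by simp
  qed
  have pcE: "\<And>x. x \<in> E' \<Longrightarrow> pclass x \<in> E"
  proof -
    fix x assume "x \<in> E'"
    then obtain X where X: "X \<in> E" "x \<in> X" by (auto simp: E'_def)
    then obtain x0 where "X = pclass x0" using assms(3) by (auto simp: pface_def)
    then show "pclass x \<in> E" using X pclass_mem by metis
  qed
  define U1 where "U1 = (\<Union>x\<in>E'. upper_shadow x)"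
  have fU1: "finite U1" using finE' by (simp add: U1_def finite_us)
  have b1: "real (card E') * real p - real (card E')^2/2 \<le> real (card U1)"
    unfolding U1_def
  proof (rule union_bound[OF finE'])
    show "\<And>a. a \<in> E' \<Longrightarrow> finite (upper_shadow a)" by (simp add: finite_us)
    show "\<And>a. a \<in> E' \<Longrightarrow> real p \<le> real (card (upper_shadow a))"
      using E'face card_us Npp by auto
    show "\<And>a b. a \<in> E' \<Longrightarrow> b \<in> E' \<Longrightarrow> a \<noteq> b \<Longrightarrow> card (upper_shadow a \<inter> upper_shadow b) \<le> 1"
      using len us_inter by simp
  qed
  have sub1: "pclass ` U1 \<subseteq> touched_upper_checks N p E"
  proof
    fix F assume "F \<in> pclass ` U1"
    then obtain f x where fx: "F = pclass f" "f \<in> upper_shadow x" "x \<in> E'" by (auto simp: U1_def)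
    have "f \<in> face N (p+1)" using us_face fx E'face by blast
    then have "F \<in> pface N (p+1)" using fx by (simp add: pface_def)
    moreover have "pclass x \<in> plower_shadow F"
      unfolding plower_shadow_def using fx us_back by (auto simp: pclass_def)
    ultimately show "F \<in> touched_upper_checks N p E"
      using pcE[OF fx(3)] by (auto simp: touched_upper_checks_def)
  qed
  have c1: "card U1 \<le> 2 * card (touched_upper_checks N p E)"
  proof -
    have "finite (touched_upper_checks N p E)"
      using finite_pface[of N "p+1"] by (rule finite_subset[rotated]) (auto simp: touched_upper_checks_def)
    then have "card (pclass ` U1) \<le> card (touched_upper_checks N p E)" using sub1 card_mono by blast
    then show ?thesis using card_pclass_image[OF fU1] by simp
  qed
  define U2 where "U2 = (\<Union>x\<in>E'. lower_shadow x)"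
  have fU2: "finite U2" using finE' by (simp add: U2_def finite_ls)
  have b2: "real (card E') * real N - real (card E')^2/2 \<le> real (card U2)"
    unfolding U2_def
  proof (rule union_bound[OF finE'])
    show "\<And>a. a \<in> E' \<Longrightarrow> finite (lower_shadow a)" by (simp add: finite_ls)
    show "\<And>a. a \<in> E' \<Longrightarrow> real N \<le> real (card (lower_shadow a))"
      using E'face card_ls assms(1,2) by fastforce
    show "\<And>a b. a \<in> E' \<Longrightarrow> b \<in> E' \<Longrightarrow> a \<noteq> b \<Longrightarrow> card (lower_shadow a \<inter> lower_shadow b) \<le> 1"
      using len ls_inter by simp
  qed
  have sub2: "pclass ` U2 \<subseteq> touched_lower_checks N p E"
  proof
    fix G assume "G \<in> pclass ` U2"
    then obtain g x where gx: "G = pclass g" "g \<in> lower_shadow x" "x \<in> E'" by (auto simp: U2_def)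
    have "g \<in> face N (p-1)" using ls_face gx E'face by blast
    then have "G \<in> pface N (p-1)" using gx by (simp add: pface_def)
    moreover have "pclass x \<in> pupper_shadow G"
      unfolding pupper_shadow_def using gx ls_back by (auto simp: pclass_def)
    ultimately show "G \<in> touched_lower_checks N p E"
      using pcE[OF gx(3)] by (auto simp: touched_lower_checks_def)
  qed
  have c2: "card U2 \<le> 2 * card (touched_lower_checks N p E)"
  proof -
    have "finite (touched_lower_checks N p E)"
      using finite_pface[of N "p-1"] by (rule finite_subset[rotated]) (auto simp: touched_lower_checks_def)
    then have "card (pclass ` U2) \<le> card (touched_lower_checks N p E)" using sub2 card_mono by blast
    then show ?thesis using card_pclass_image[OF fU2] by simp
  qed
  have ce: "real (card E') = 2 * e" using cE' e_def by simp
  have eN: "e * e \<le> e * (real N / 64)" using e0 assms(4) e_def by (intro mult_left_mono) auto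
  have r1: "real (card U1) \<le> 2 * real (card (touched_upper_checks N p E))" using c1 by linarith
  have r2: "real (card U2) \<le> 2 * real (card (touched_lower_checks N p E))" using c2 by linarith
  have "e * (real N / 2) * (15/16) \<le> real (card (touched_upper_checks N p E))"
    using b1 r1 eN Np unfolding ce by (simp add: power2_eq_square algebra_simps)
  moreover have "e * real N * (15/16) \<le> real (card (touched_lower_checks N p E))"
    using b2 r2 eN unfolding ce by (simp add: power2_eq_square algebra_simps)
  ultimately show ?thesis unfolding e_def by simp
qed

end
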